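(* Consider logistic regression with binary responses $y_i\in\{0,1\}$, $i=1,\dots,n$, design matrix $X\in\mathbb{R}^{n\times(p+1)}$ whose first column is the intercept column, whose next $m$ columns are mandatory predictors and whose remaining columns form $X_u\in\mathbb{R}^{n\times(p-m)}$, and log-likelihood $\ell(\beta_0,\boldsymbol{\beta})=\sum_{i=1}^n\bigl(y_i\eta_i-\log(1+e^{\eta_i})\bigr)$ with $\eta_i=\beta_0+\mathbf{x}_i^\top\boldsymbol{\beta}$. Fix $\lambda\ge0$, let $\nu_{\max}$ be the largest eigenvalue of $X_u^\top X_u$, and let $\delta\ge\nu_{\max}/(8n)$, $\delta>0$. For $\mathbf{t}\in[0,1]^{p-m}$ let $T_{\mathbf{t}}=\mathrm{diag}(1,\dots,1,t_1,\dots,t_{p-m})$ (with $m$ leading ones), $\Gamma_{\mathbf{t}}=\sqrt{I-T_{\mathbf{t}}^2}$, and $$f_{\delta,\lambda}(\mathbf{t})=\inf_{\beta_0,\boldsymbol{\beta}}\Bigl[-\tfrac1n\ell(\beta_0,T_{\mathbf{t}}\boldsymbol{\beta})+\lambda\|\boldsymbol{\beta}\|_2^2+\delta\|\Gamma_{\mathbf{t}}\boldsymbol{\beta}\|_2^2\Bigr].$$ Then $f_{\delta,\lambda}$ is concave on $(0,1)^{p-m}$ (extending concavely to $\mathcal{T}_k=\{\mathbf{t}\in[0,1]^{p-m}:\mathbf{1}^\top\mathbf{t}=k\}$), and a minimizer of $f_{\delta,\lambda}$ over $\mathcal{T}_k$ can be chosen in $\mathcal{S}_k=\{\mathbf{s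}\in\{0,1\}^{p-m}:\mathbf{1}^\top\mathbf{s}=k\}$.
   Context: Here $\mathbf{x}_i^\top$ is the $i$th row of $X$ without the intercept entry. The quantity $\nu_{\max}/(8n)$ is the paper's explicit concavity threshold for logistic regression. *)

theory Defs
  imports Complex_Main "Jordan_Normal_Form.Matrix" "Jordan_Normal_Form.Char_Poly"
begin

(* Data: n observations, responses y i (i < n), predictor matrix x i j (i < n, j < p),
   i.e. the design matrix X without its intercept column.  Columns j < m are the
   mandatory predictors, columns m + l (l < p - m) form X_u.
   Vectors beta are functions nat => real, only coordinates j < p are relevant.
   The selection vector t is indexed by l < p - m (t l corresponds to column m + l). *)

definition loglik :: "nat \<Rightarrow> nat \<Rightarrow> (nat \<Rightarrow> real) \<Rightarrow> (nat \<Rightarrow> nat \<Rightarrow> real)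
                       \<Rightarrow> real \<Rightarrow> (nat \<Rightarrow> real) \<Rightarrow> real" where
  "loglik n p y x b0 b =
     (\<Sum>i<n. let eta = b0 + (\<Sum>j<p. x i j * b j) in y i * eta - ln (1 + exp eta))"

definition Tdiag :: "nat \<Rightarrow> (nat \<Rightarrow> real) \<Rightarrow> nat \<Rightarrow> real" where
  "Tdiag m t j = (if j < m then 1 else t (j - m))"

definition Gdiag :: "nat \<Rightarrow> (nat \<Rightarrow> real) \<Rightarrow> nat \<Rightarrow> real" where
  "Gdiag m t j = sqrt (1 - (Tdiag m t j)\<^sup>2)"

definition fobj :: "nat \<Rightarrow> nat \<Rightarrow> nat \<Rightarrow> (nat \<Rightarrow> real) \<Rightarrow> (nat \<Rightarrow> nat \<Rightarrow> real)
                     \<Rightarrow> real \<Rightarrow> real \<Rightarrow> (nat \<Rightarrow> real) \<Rightarrow> real" where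
  "fobj n p m y x \<delta> lam t =
     Inf (range (\<lambda>(b0::real, b::nat \<Rightarrow> real).
        - (1 / real n) * loglik n p y x b0 (\<lambda>j. Tdiag m t j * b j)
        + lam * (\<Sum>j<p. (b j)\<^sup>2)
        + \<delta> * (\<Sum>j<p. (Gdiag m t j * b j)\<^sup>2)))"

definition Xu :: "nat \<Rightarrow> nat \<Rightarrow> nat \<Rightarrow> (nat \<Rightarrow> nat \<Rightarrow> real) \<Rightarrow> real mat" where
  "Xu n p m x = mat n (p - m) (\<lambda>(i, l). x i (m + l))"

definition nu_max :: "nat \<Rightarrow> nat \<Rightarrow> nat \<Rightarrow> (nat \<Rightarrow> nat \<Rightarrow> real) \<Rightarrow> real" where
  "nu_max n p m x = Max {ev. eigenvalue (transpose_mat (Xu n p m x) * Xu n p m x) ev}"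

(* points of R^{p-m}, represented as functions vanishing outside {..<d} *)
definition open_cube :: "nat \<Rightarrow> (nat \<Rightarrow> real) set" where
  "open_cube d = {t. (\<forall>l<d. 0 < t l \<and> t l < 1) \<and> (\<forall>l\<ge>d. t l = 0)}"

definition Tset :: "nat \<Rightarrow> nat \<Rightarrow> (nat \<Rightarrow> real) set" where
  "Tset d k = {t. (\<forall>l<d. 0 \<le> t l \<and> t l \<le> 1) \<and> (\<forall>l\<ge>d. t l = 0) \<and> (\<Sum>l<d. t l) = real k}"

definition Sset :: "nat \<Rightarrow> nat \<Rightarrow> (nat \<Rightarrow> real) set" where
  "Sset d k = {s. (\<forall>l<d. s l \<in> {0, 1}) \<and> (\<forall>l\<ge>d. s l = 0) \<and> (\<Sum>l<d. s l) = real k}"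

definition concave_on_fun :: "(nat \<Rightarrow> real) set \<Rightarrow> ((nat \<Rightarrow> real) \<Rightarrow> real) \<Rightarrow> bool" where
  "concave_on_fun D f \<longleftrightarrow>
     (\<forall>t\<in>D. \<forall>s\<in>D. \<forall>a::real. 0 \<le> a \<and> a \<le> 1 \<longrightarrow>
        a * f t + (1 - a) * f s \<le> f (\<lambda>l. a * t l + (1 - a) * s l))"

end

theory Submission
  imports Defs "HOL-Analysis.Function_Topology" "HOL-Analysis.Convex" "Jordan_Normal_Form.Spectral_Radius"
begin


definition linX :: "nat \<Rightarrow> nat \<Rightarrow> (nat \<Rightarrow> nat \<Rightarrow> real) \<Rightarrow> (nat \<Rightarrow> real) \<Rightarrow> nat \<Rightarrow> real" where
  "linX d m x u i = (\<Sum>l<d. x i (m + l) * u l)"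

lemma eig_le_nu:
  assumes d: "d = p - m" and nz: "(\<Sum>l<d. (u l)\<^sup>2) = 1"
    and eq: "\<forall>l<d. (\<Sum>i<n. x i (m + l) * linX d m x u i) = c * u l"
  shows "c \<le> nu_max n p m x"
proof -
  define A where "A = transpose_mat (Xu n p m x) * Xu n p m x"
  define v where "v = vec d u"
  have Ac: "A \<in> carrier_mat d d" unfolding A_def Xu_def d by auto
  have vc: "v \<in> carrier_vec d" unfolding v_def by auto
  have vnz: "v \<noteq> 0\<^sub>v d"
  proof
    assume "v = 0\<^sub>v d"
    then have "\<forall>l<d. u l = 0" unfolding v_def by (metis index_vec index_zero_vec(1))
    then have "(\<Sum>l<d. (u l)\<^sup>2) = 0" by simp
    with nz show False by simp
  qed
  have Aent: "A $$ (l, l') = (\<Sum>i<n. x i (m + l) * x i (m + l'))" if "l < d" "l' < d" for l l'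
    using that unfolding A_def Xu_def d
    by (auto simp: scalar_prod_def lessThan_atLeast0 intro!: sum.cong)
  have "A *\<^sub>v v = c \<cdot>\<^sub>v v"
  proof (rule eq_vecI)
    fix l assume "l < dim_vec (c \<cdot>\<^sub>v v)"
    then have l: "l < d" using vc by simp
    have "(A *\<^sub>v v) $ l = (\<Sum>l'<d. A $$ (l, l') * u l')"
      using Ac l unfolding v_def by (auto simp: scalar_prod_def lessThan_atLeast0 intro!: sum.cong)
    also have "\<dots> = (\<Sum>l'<d. (\<Sum>i<n. x i (m + l) * x i (m + l')) * u l')"
      using l by (auto simp: Aent intro!: sum.cong)
    also have "\<dots> = (\<Sum>i<n. x i (m + l) * linX d m x u i)"
      unfolding linX_def by (simp add: sum_distrib_left sum_distrib_right mult.assoc sum.swap[of _ "{..<d}"])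
    also have "\<dots> = c * u l" using eq l by simp
    finally show "(A *\<^sub>v v) $ l = (c \<cdot>\<^sub>v v) $ l" using l unfolding v_def by simp
  qed (use Ac vc in simp)
  then have "eigenvalue A c" unfolding eigenvalue_def eigenvector_def using Ac vc vnz by auto
  moreover have "finite (spectrum A)" using card_finite_spectrum[OF Ac] by simp
  ultimately show ?thesis unfolding nu_max_def A_def[symmetric] spectrum_def
    by (simp add: Max_ge)
qed

lemma linX_add: "linX d m x (\<lambda>l. u l + s * w l) i = linX d m x u i + s * linX d m x w i"
  unfolding linX_def by (simp add: algebra_simps sum.distrib sum_distrib_left)

lemma linX_scale: "linX d m x (\<lambda>l. if l < d then v l / r else 0) i = linX d m x v i / r"
  unfolding linX_def by (simp add: sum_divide_distrib)

lemma scaled_bound: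
  assumes max: "\<And>u. (\<forall>l. u l \<in> (if l < d then {-1..1} else {0})) \<Longrightarrow> (\<Sum>l<d. (u l)\<^sup>2) = 1
      \<Longrightarrow> (\<Sum>i<n. (linX d m x u i)\<^sup>2) \<le> c"
  shows "(\<Sum>i<n. (linX d m x v i)\<^sup>2) \<le> c * (\<Sum>l<d. (v l)\<^sup>2)"
proof (cases "(\<Sum>l<d. (v l)\<^sup>2) = 0")
  case True
  then have "\<forall>l<d. v l = 0" by (simp add: sum_nonneg_eq_0_iff)
  then have "\<And>i. linX d m x v i = 0" unfolding linX_def by simp
  then show ?thesis using True by simp
next
  case False
  define N where "N = (\<Sum>l<d. (v l)\<^sup>2)"
  have Npos: "N > 0" using False unfolding N_def by (simp add: order_le_neq_trans sum_nonneg)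
  define r where "r = sqrt N"
  have rpos: "r > 0" and r2: "r\<^sup>2 = N" using Npos unfolding r_def by auto
  define u where "u = (\<lambda>l. if l < d then v l / r else 0)"
  have "\<forall>l. u l \<in> (if l < d then {-1..1} else {0})"
  proof
    fix l show "u l \<in> (if l < d then {-1..1} else {0})"
    proof (cases "l < d")
      case True
      have "(v l)\<^sup>2 \<le> N" unfolding N_def using True by (intro member_le_sum) auto
      then have "(u l)\<^sup>2 \<le> 1" using True rpos r2 Npos by (simp add: u_def power_divide divide_le_eq)
      then have "\<bar>u l\<bar> \<le> 1" using abs_square_le_1 by blast
      then show ?thesis using True by auto
    qed (simp add: u_def)
  qed
  moreover have "(\<Sum>l<d. (u l)\<^sup>2) = 1"
    using rpos r2 Npos unfolding u_def N_def by (simp add: power_divide sum_divide_distrib[symmetric])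
  ultimately have "(\<Sum>i<n. (linX d m x u i)\<^sup>2) \<le> c" by (rule max)
  moreover have "(\<Sum>i<n. (linX d m x u i)\<^sup>2) = (\<Sum>i<n. (linX d m x v i)\<^sup>2) / N"
    unfolding u_def linX_scale using r2 by (simp add: power_divide sum_divide_distrib[symmetric])
  ultimately show ?thesis using Npos unfolding N_def[symmetric] by (simp add: divide_le_eq mult.commute)
qed

lemma sum_sq_expand:
  fixes a b :: "'a \<Rightarrow> real"
  shows "(\<Sum>i\<in>A. (a i + s * b i)\<^sup>2) = (\<Sum>i\<in>A. (a i)\<^sup>2) + 2 * s * (\<Sum>i\<in>A. a i * b i) + s\<^sup>2 * (\<Sum>i\<in>A. (b i)\<^sup>2)"
proof -
  have "\<And>i. (a i + s * b i)\<^sup>2 = (a i)\<^sup>2 + (2 * s) * (a i * b i) + s\<^sup>2 * (b i)\<^sup>2"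
    by (simp add: power2_eq_square algebra_simps)
  then show ?thesis by (simp add: sum.distrib sum_distrib_left)
qed

lemma swapP: "(\<Sum>i<n. linX d m x u i * linX d m x r i) = (\<Sum>l<d. r l * (\<Sum>i<n. x i (m + l) * linX d m x u i))"
proof -
  have "(\<Sum>i<n. linX d m x u i * linX d m x r i) = (\<Sum>i<n. \<Sum>l<d. linX d m x u i * (x i (m + l) * r l))"
    by (simp add: linX_def[of d m x r] sum_distrib_left)
  also have "\<dots> = (\<Sum>l<d. \<Sum>i<n. linX d m x u i * (x i (m + l) * r l))" by (rule sum.swap)
  also have "\<dots> = (\<Sum>l<d. r l * (\<Sum>i<n. x i (m + l) * linX d m x u i))"
    by (simp add: sum_distrib_left mult_ac)
  finally show ?thesis .
qed
lemma foc:
  assumes bound: "\<And>v. (\<Sum>i<n. (linX d m x v i)\<^sup>2) \<le> c * (\<Sum>l<d. (v l)\<^sup>2)"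
    and u1: "(\<Sum>l<d. (u l)\<^sup>2) = 1" and uc: "(\<Sum>i<n. (linX d m x u i)\<^sup>2) = c"
  shows "\<forall>l<d. (\<Sum>i<n. x i (m + l) * linX d m x u i) = c * u l"
proof -
  define r where "r = (\<lambda>l. (\<Sum>i<n. x i (m + l) * linX d m x u i) - c * u l)"
  define R where "R = (\<Sum>l<d. (r l)\<^sup>2)"
  define K where "K = (\<Sum>i<n. (linX d m x r i)\<^sup>2) - c * (\<Sum>l<d. (r l)\<^sup>2)"
  define P where "P = (\<Sum>i<n. linX d m x u i * linX d m x r i)"
  define Q where "Q = (\<Sum>l<d. u l * r l)"
  have PQ: "P - c * Q = R"
  proof -
    have "P = (\<Sum>l<d. r l * (\<Sum>i<n. x i (m + l) * linX d m x u i))"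
      unfolding P_def by (rule swapP)
    moreover have "c * Q = (\<Sum>l<d. r l * (c * u l))"
      unfolding Q_def by (simp add: sum_distrib_left mult_ac)
    ultimately have "P - c * Q = (\<Sum>l<d. r l * ((\<Sum>i<n. x i (m + l) * linX d m x u i) - c * u l))"
      by (simp add: sum_subtractf[symmetric] right_diff_distrib)
    also have "\<dots> = R" unfolding R_def r_def by (simp add: power2_eq_square)
    finally show ?thesis .
  qed
  have key: "2 * s * R + s\<^sup>2 * K \<le> 0" for s
  proof -
    have "(\<Sum>i<n. (linX d m x (\<lambda>l. u l + s * r l) i)\<^sup>2) \<le> c * (\<Sum>l<d. (u l + s * r l)\<^sup>2)"
      using bound by simp
    moreover have "(\<Sum>i<n. (linX d m x (\<lambda>l. u l + s * r l) i)\<^sup>2) = c + 2 * s * P + s\<^sup>2 * (\<Sum>i<n. (linX d m x r i)\<^sup>2)"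
      unfolding linX_add sum_sq_expand uc P_def ..
    moreover have "(\<Sum>l<d. (u l + s * r l)\<^sup>2) = 1 + 2 * s * Q + s\<^sup>2 * (\<Sum>l<d. (r l)\<^sup>2)"
      unfolding sum_sq_expand u1 Q_def ..
    ultimately have "c + 2 * s * P + s\<^sup>2 * (\<Sum>i<n. (linX d m x r i)\<^sup>2) \<le> c * (1 + 2 * s * Q + s\<^sup>2 * (\<Sum>l<d. (r l)\<^sup>2))"
      by simp
    then have "2 * s * (P - c * Q) + s\<^sup>2 * K \<le> 0" unfolding K_def by (simp add: algebra_simps)
    then show ?thesis using PQ by simp
  qed
  have R0: "R \<ge> 0" unfolding R_def by (simp add: sum_nonneg)
  have "R = 0"
  proof (rule ccontr)
    assume "R \<noteq> 0"
    then have Rp: "R > 0" using R0 by simp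
    define s where "s = R / (\<bar>K\<bar> + 1)"
    have sp: "s > 0" unfolding s_def using Rp by (simp add: add_pos_nonneg)
    have "2 * s * R + s\<^sup>2 * K \<le> 0" by (rule key)
    then have "s * (2 * R + s * K) \<le> 0" by (simp add: power2_eq_square algebra_simps)
    then have h: "2 * R + s * K \<le> 0" using sp by (simp add: mult_le_0_iff)
    have "s * K \<ge> - (s * \<bar>K\<bar>)" using sp
      by (metis abs_ge_minus_self minus_le_iff mult_left_mono mult_minus_right less_imp_le)
    moreover have "s * \<bar>K\<bar> \<le> R" unfolding s_def using Rp
      by (simp add: field_simps)
    ultimately have "s * K \<ge> - R" by linarith
    with h Rp show False by linarith
  qed
  then have "\<forall>l<d. r l = 0" unfolding R_def by (simp add: sum_nonneg_eq_0_iff)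
  then show ?thesis unfolding r_def by simp
qed

lemma rayleigh:
  assumes d: "d = p - m"
  shows "(\<Sum>i<n. (linX d m x w i)\<^sup>2) \<le> nu_max n p m x * (\<Sum>l<d. (w l)\<^sup>2)"
proof (cases "d = 0")
  case True
  then show ?thesis unfolding linX_def by simp
next
  case False
  define K where "K = (\<lambda>l::nat. if l < d then {-1..1::real} else {0})"
  define q where "q = (\<lambda>u. \<Sum>i<n. (linX d m x u i)\<^sup>2)"
  define S where "S = {u. (\<forall>l. u l \<in> K l) \<and> (\<Sum>l<d. (u l)\<^sup>2) = 1}"
  have PiK: "PiE UNIV K = {u. \<forall>l. u l \<in> K l}" by (auto simp: PiE_def Pi_def)
  have "compactin (product_topology (\<lambda>i. euclidean) UNIV) (PiE UNIV K)"
    by (simp add: compactin_PiE K_def)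
  then have cK: "compact {u. \<forall>l. u l \<in> K l}" by (simp add: euclidean_product_topology PiK)
  have "closed {u::nat\<Rightarrow>real. (\<Sum>l<d. (u l)\<^sup>2) = 1}"
    by (intro closed_Collect_eq continuous_intros) auto
  then have cS: "compact S" unfolding S_def using compact_Int_closed[OF cK]
    by (simp add: Collect_conj_eq)
  have e1: "(\<Sum>l<d. (if l = 0 then 1 else 0::real)\<^sup>2) = 1"
  proof -
    have "(\<Sum>l<d. (if l = 0 then 1 else 0::real)\<^sup>2) = (\<Sum>l<d. if l = 0 then 1 else 0::real)"
      by (rule sum.cong) auto
    also have "\<dots> = 1" using False by simp
    finally show ?thesis .
  qed
  have "(\<lambda>l. if l = 0 then 1 else 0) \<in> S" using False e1 unfolding S_def K_def by auto
  then have ne: "S \<noteq> {}" by auto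
  have cq: "continuous_on S q" unfolding q_def linX_def
    by (intro continuous_intros) (auto intro: continuous_on_subset[OF continuous_on_product_coordinates])
  obtain u0 where u0S: "u0 \<in> S" and u0max: "\<forall>y\<in>S. q y \<le> q u0"
    using continuous_attains_sup[OF cS ne cq] by blast
  have bnd: "q v \<le> q u0 * (\<Sum>l<d. (v l)\<^sup>2)" for v
    unfolding q_def
    by (rule scaled_bound) (use u0max in \<open>auto simp: S_def K_def q_def\<close>)
  have u01: "(\<Sum>l<d. (u0 l)\<^sup>2) = 1" using u0S unfolding S_def by simp
  have "\<forall>l<d. (\<Sum>i<n. x i (m + l) * linX d m x u0 i) = q u0 * u0 l"
    using foc[where c="q u0" and u=u0 and d=d and m=m and x=x and n=n] bnd u01 unfolding q_def by blast
  then have "q u0 \<le> nu_max n p m x" by (rule eig_le_nu[OF d u01])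
  then have "q u0 * (\<Sum>l<d. (w l)\<^sup>2) \<le> nu_max n p m x * (\<Sum>l<d. (w l)\<^sup>2)"
    by (simp add: mult_right_mono sum_nonneg)
  with bnd[of w] show ?thesis unfolding q_def by simp
qed



lemma sig_deriv: "((\<lambda>t. exp t / (1 + exp t)) has_real_derivative exp t / (1 + exp t)\<^sup>2) (at t)"
proof -
  have ne: "1 + exp t \<noteq> 0" by (smt (verit) exp_gt_zero)
  show ?thesis
    by (rule derivative_eq_intros refl | use ne in \<open>simp add: field_simps power2_eq_square\<close>)+
qed

lemma lnexp_deriv: "((\<lambda>t. ln (1 + exp t)) has_real_derivative exp t / (1 + exp t)) (at t)"
proof -
  have ne: "0 < 1 + exp t" by (smt (verit) exp_gt_zero)
  show ?thesis
    by (rule derivative_eq_intros refl | use ne in \<open>simp add: field_simps\<close>)+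
qed

lemma sig_quarter: "exp t / (1 + exp t)\<^sup>2 \<le> (1 / 4 :: real)"
proof -
  have e: "exp t > 0" by simp
  have "4 * exp t \<le> (1 + exp t)\<^sup>2"
    using sum_squares_ge_zero[of "1 - exp t" 0] by (simp add: power2_eq_square algebra_simps)
  then show ?thesis using e by (simp add: divide_le_eq field_simps)
qed

lemma h_mono:
  assumes "x \<le> (y::real)"
  shows "x / 4 - exp x / (1 + exp x) \<le> y / 4 - exp y / (1 + exp y)"
proof -
  have "(\<lambda>t. t / 4 - exp t / (1 + exp t)) x \<le> (\<lambda>t. t / 4 - exp t / (1 + exp t)) y"
  proof (rule DERIV_nonneg_imp_nondecreasing[OF assms])
    fix t
    have "((\<lambda>t. t / 4 - exp t / (1 + exp t)) has_real_derivative 1 / 4 - exp t / (1 + exp t)\<^sup>2) (at t)"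
      by (intro derivative_intros sig_deriv) (auto intro!: derivative_eq_intros)
    moreover have "1 / 4 - exp t / (1 + exp t)\<^sup>2 \<ge> 0" using sig_quarter[of t] by simp
    ultimately show "\<exists>y. ((\<lambda>t. t / 4 - exp t / (1 + exp t)) has_real_derivative y) (at t) \<and> 0 \<le> y"
      by blast
  qed
  then show ?thesis by simp
qed

lemma g_convex: "convex_on UNIV (\<lambda>t. t\<^sup>2 / 8 - ln (1 + exp t))"
proof (rule convex_on_realI[where f' = "\<lambda>t. t / 4 - exp t / (1 + exp t)"])
  fix t :: real
  have "((\<lambda>t. t\<^sup>2 / 8) has_real_derivative t / 4) (at t)"
    by (auto intro!: derivative_eq_intros)
  then show "((\<lambda>t. t\<^sup>2 / 8 - ln (1 + exp t)) has_real_derivative t / 4 - exp t / (1 + exp t)) (at t)"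
    by (intro derivative_intros lnexp_deriv)
qed (auto intro: h_mono)

lemma psi_ineq:
  fixes a u v :: real
  assumes "0 \<le> a" "a \<le> 1"
  shows "a * ln (1 + exp u) + (1 - a) * ln (1 + exp v) - ln (1 + exp (a * u + (1 - a) * v))
         \<le> a * (1 - a) * (u - v)\<^sup>2 / 8"
proof -
  have "(\<lambda>t. t\<^sup>2 / 8 - ln (1 + exp t)) ((1 - a) *\<^sub>R v + a *\<^sub>R u)
      \<le> (1 - a) * (\<lambda>t. t\<^sup>2 / 8 - ln (1 + exp t)) v + a * (\<lambda>t. t\<^sup>2 / 8 - ln (1 + exp t)) u"
    by (rule convex_onD[OF g_convex]) (use assms in auto)
  then have h: "(a * u + (1 - a) * v)\<^sup>2 / 8 - ln (1 + exp (a * u + (1 - a) * v))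
      \<le> (1 - a) * (v\<^sup>2 / 8 - ln (1 + exp v)) + a * (u\<^sup>2 / 8 - ln (1 + exp u))"
    by (simp add: add.commute)
  have id: "a * ln (1 + exp u) + (1 - a) * ln (1 + exp v) - ln (1 + exp (a * u + (1 - a) * v))
         - a * (1 - a) * (u - v)\<^sup>2 / 8
      = - (((1 - a) * (v\<^sup>2 / 8 - ln (1 + exp v)) + a * (u\<^sup>2 / 8 - ln (1 + exp u)))
           - ((a * u + (1 - a) * v)\<^sup>2 / 8 - ln (1 + exp (a * u + (1 - a) * v))))"
    by (simp add: power2_eq_square field_simps; algebra)
  from h id show ?thesis by linarith
qed


lemma split_sum:
  fixes f :: "nat \<Rightarrow> real"
  assumes "m \<le> p"
  shows "(\<Sum>j<p. f j) = (\<Sum>j<m. f j) + (\<Sum>l<p - m. f (m + l))"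
proof -
  have "{..<p} = {..<m} \<union> {m..<p}" using assms by auto
  then have "(\<Sum>j<p. f j) = (\<Sum>j<m. f j) + (\<Sum>j\<in>{m..<p}. f j)"
    using sum.atLeastLessThan_concat[of 0 m p f] assms by (simp add: lessThan_atLeast0)
  moreover have "(\<Sum>j\<in>{m..<p}. f j) = (\<Sum>l<p - m. f (m + l))"
  proof -
    have "{m..<p} = (\<lambda>l. m + l) ` {..<p - m}"
    proof
      show "{m..<p} \<subseteq> (\<lambda>l. m + l) ` {..<p - m}"
      proof
        fix j assume "j \<in> {m..<p}"
        then show "j \<in> (\<lambda>l. m + l) ` {..<p - m}" by (intro image_eqI[where x="j - m"]) auto
      qed
    qed auto
    moreover have "inj_on (\<lambda>l. m + l) {..<p - m}" by (auto simp: inj_on_def)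
    ultimately show ?thesis by (simp add: sum.reindex)
  qed
  ultimately show ?thesis by simp
qed

lemma loglik_nonpos:
  assumes "\<forall>i<n. y i \<in> {0, 1}"
  shows "loglik n p y x b0 b \<le> 0"
  unfolding loglik_def Let_def
proof (rule sum_nonpos)
  fix i assume "i \<in> {..<n}"
  then have yi: "y i = 0 \<or> y i = 1" using assms by auto
  define e where "e = b0 + (\<Sum>j<p. x i j * b j)"
  have l0: "0 \<le> ln (1 + exp e)" by simp
  have l1: "e \<le> ln (1 + exp e)"
  proof -
    have "e = ln (exp e)" by simp
    also have "\<dots> \<le> ln (1 + exp e)" by (subst ln_le_cancel_iff) (use exp_gt_zero[of e] in linarith)+
    finally show ?thesis .
  qed
  show "y i * e - ln (1 + exp e) \<le> 0" using yi l0 l1 by auto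
qed

definition Fobj :: "nat \<Rightarrow> nat \<Rightarrow> nat \<Rightarrow> (nat \<Rightarrow> real) \<Rightarrow> (nat \<Rightarrow> nat \<Rightarrow> real)
                     \<Rightarrow> real \<Rightarrow> real \<Rightarrow> (nat \<Rightarrow> real) \<Rightarrow> real \<Rightarrow> (nat \<Rightarrow> real) \<Rightarrow> real" where
  "Fobj n p m y x \<delta> lam t b0 b =
        - (1 / real n) * loglik n p y x b0 (\<lambda>j. Tdiag m t j * b j)
        + lam * (\<Sum>j<p. (b j)\<^sup>2)
        + \<delta> * (\<Sum>j<p. (Gdiag m t j * b j)\<^sup>2)"

lemma fobj_Fobj: "fobj n p m y x \<delta> lam t = Inf (range (\<lambda>(b0, b). Fobj n p m y x \<delta> lam t b0 b))"
  unfolding fobj_def Fobj_def ..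

lemma Fobj_nonneg:
  assumes "\<forall>i<n. y i \<in> {0, 1}" "0 \<le> lam" "0 \<le> \<delta>"
  shows "0 \<le> Fobj n p m y x \<delta> lam t b0 b"
proof -
  have "loglik n p y x b0 (\<lambda>j. Tdiag m t j * b j) \<le> 0" by (rule loglik_nonpos[OF assms(1)])
  then have "0 \<le> - (1 / real n) * loglik n p y x b0 (\<lambda>j. Tdiag m t j * b j)"
    by (simp add: divide_nonpos_nonneg)
  moreover have "0 \<le> lam * (\<Sum>j<p. (b j)\<^sup>2)" using assms by (simp add: sum_nonneg)
  moreover have "0 \<le> \<delta> * (\<Sum>j<p. (Gdiag m t j * b j)\<^sup>2)" using assms by (simp add: sum_nonneg)
  ultimately show ?thesis unfolding Fobj_def by linarith
qed

lemma Fobj_expand: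
  assumes box: "\<forall>l<p - m. 0 \<le> c l \<and> c l \<le> 1"
  shows "Fobj n p m y x \<delta> lam c b0 b =
     (\<Sum>i<n. ln (1 + exp (b0 + (\<Sum>j<p. x i j * (Tdiag m c j * b j))))
               - y i * (b0 + (\<Sum>j<p. x i j * (Tdiag m c j * b j)))) / real n
     + lam * (\<Sum>j<p. (b j)\<^sup>2) + \<delta> * (\<Sum>j<p. (1 - (Tdiag m c j)\<^sup>2) * (b j)\<^sup>2)"
proof -
  have G: "(Gdiag m c j * b j)\<^sup>2 = (1 - (Tdiag m c j)\<^sup>2) * (b j)\<^sup>2" if "j < p" for j
  proof -
    have "0 \<le> Tdiag m c j \<and> Tdiag m c j \<le> 1"
      using box that unfolding Tdiag_def by auto
    then have "(Tdiag m c j)\<^sup>2 \<le> 1" by (simp add: abs_square_le_1)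
    then show ?thesis unfolding Gdiag_def by (simp add: power_mult_distrib)
  qed
  have L: "- (1 / real n) * loglik n p y x b0 (\<lambda>j. Tdiag m c j * b j) =
     (\<Sum>i<n. ln (1 + exp (b0 + (\<Sum>j<p. x i j * (Tdiag m c j * b j))))
               - y i * (b0 + (\<Sum>j<p. x i j * (Tdiag m c j * b j)))) / real n"
  proof -
    have "(\<Sum>i<n. ln (1 + exp (b0 + (\<Sum>j<p. x i j * (Tdiag m c j * b j))))
               - y i * (b0 + (\<Sum>j<p. x i j * (Tdiag m c j * b j))))
      = - (\<Sum>i<n. y i * (b0 + (\<Sum>j<p. x i j * (Tdiag m c j * b j))) - ln (1 + exp (b0 + (\<Sum>j<p. x i j * (Tdiag m c j * b j)))))"
      by (simp add: sum_negf[symmetric])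
    then show ?thesis unfolding loglik_def Let_def by simp
  qed
  show ?thesis unfolding Fobj_def L using G by simp
qed

lemma Tdiag_comb:
  "Tdiag m (\<lambda>l. a * t l + (1 - a) * s l) j = a * Tdiag m t j + (1 - a) * Tdiag m s j"
  unfolding Tdiag_def by (simp add: algebra_simps)

lemma Fobj_concave:
  assumes "0 < n" "m \<le> p" and y: "\<forall>i<n. y i \<in> {0, 1}"
    and nu: "\<delta> \<ge> nu_max n p m x / (8 * real n)" "0 < \<delta>"
    and bt: "\<forall>l<p - m. 0 \<le> t l \<and> t l \<le> 1" and bs: "\<forall>l<p - m. 0 \<le> s l \<and> s l \<le> 1"
    and a: "0 \<le> a" "a \<le> 1"
  shows "a * Fobj n p m y x \<delta> lam t b0 b + (1 - a) * Fobj n p m y x \<delta> lam s b0 b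
         \<le> Fobj n p m y x \<delta> lam (\<lambda>l. a * t l + (1 - a) * s l) b0 b"
proof -
  define d where "d = p - m"
  define z where "z = (\<lambda>l. a * t l + (1 - a) * s l)"
  have bz: "\<forall>l<p - m. 0 \<le> z l \<and> z l \<le> 1"
  proof (intro allI impI)
    fix l assume "l < p - m"
    then have "0 \<le> t l" "t l \<le> 1" "0 \<le> s l" "s l \<le> 1" using bt bs by auto
    then have "0 \<le> a * t l" "0 \<le> (1 - a) * s l" "a * t l \<le> a" "(1 - a) * s l \<le> 1 - a"
      using a by (auto intro: mult_nonneg_nonneg mult_left_le)
    then show "0 \<le> z l \<and> z l \<le> 1" unfolding z_def by linarith
  qed
  define eta where "eta = (\<lambda>c i. b0 + (\<Sum>j<p. x i j * (Tdiag m c j * b j)))"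
  define Lf where "Lf = (\<lambda>c. \<Sum>i<n. ln (1 + exp (eta c i)) - y i * eta c i)"
  define Df where "Df = (\<lambda>c. \<Sum>j<p. (1 - (Tdiag m c j)\<^sup>2) * (b j)\<^sup>2)"
  define B where "B = (\<Sum>j<p. (b j)\<^sup>2)"
  define w where "w = (\<lambda>l. b (m + l) * (t l - s l))"
  have FE: "\<And>c. \<forall>l<p - m. 0 \<le> c l \<and> c l \<le> 1 \<Longrightarrow> Fobj n p m y x \<delta> lam c b0 b = Lf c / real n + lam * B + \<delta> * Df c"
    unfolding Lf_def Df_def B_def eta_def by (rule Fobj_expand)
  have etaz: "eta z i = a * eta t i + (1 - a) * eta s i" for i
  proof -
    have "eta z i = b0 + (\<Sum>j<p. a * (x i j * (Tdiag m t j * b j)) + (1 - a) * (x i j * (Tdiag m s j * b j)))"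
      unfolding eta_def z_def Tdiag_comb by (intro arg_cong2[where f="(+)"] refl sum.cong) (simp_all add: algebra_simps)
    also have "\<dots> = a * eta t i + (1 - a) * eta s i"
      unfolding eta_def sum.distrib sum_distrib_left[symmetric] by (simp add: algebra_simps)
    finally show ?thesis .
  qed
  have etad: "eta t i - eta s i = linX d m x w i" for i
  proof -
    have "eta t i - eta s i = (\<Sum>j<p. x i j * b j * (Tdiag m t j - Tdiag m s j))"
      unfolding eta_def by (simp add: sum_subtractf[symmetric] algebra_simps)
    also have "\<dots> = (\<Sum>j<m. x i j * b j * (Tdiag m t j - Tdiag m s j))
        + (\<Sum>l<d. x i (m + l) * b (m + l) * (Tdiag m t (m + l) - Tdiag m s (m + l)))"
      unfolding d_def by (rule split_sum[OF assms(2)])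
    also have "\<dots> = linX d m x w i"
      unfolding linX_def w_def Tdiag_def by (simp add: mult.assoc)
    finally show ?thesis .
  qed
  have Dd: "a * Df t + (1 - a) * Df s - Df z = - (a * (1 - a)) * (\<Sum>l<d. (w l)\<^sup>2)"
  proof -
    have pt: "a * ((1 - u\<^sup>2) * c) + (1 - a) * ((1 - v\<^sup>2) * c) - (1 - (a * u + (1 - a) * v)\<^sup>2) * c
        = - (a * (1 - a)) * ((u - v)\<^sup>2 * c)" for u v c :: real
      by (simp add: power2_eq_square algebra_simps)
    have "a * Df t + (1 - a) * Df s - Df z = (\<Sum>j<p. a * ((1 - (Tdiag m t j)\<^sup>2) * (b j)\<^sup>2)
        + (1 - a) * ((1 - (Tdiag m s j)\<^sup>2) * (b j)\<^sup>2) - (1 - (Tdiag m z j)\<^sup>2) * (b j)\<^sup>2)"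
      unfolding Df_def by (simp only: sum_distrib_left sum.distrib sum_subtractf)
    also have "\<dots> = (\<Sum>j<p. - (a * (1 - a)) * ((Tdiag m t j - Tdiag m s j)\<^sup>2 * (b j)\<^sup>2))"
      unfolding z_def Tdiag_comb by (rule sum.cong[OF refl], rule pt)
    also have "\<dots> = - (a * (1 - a)) * (\<Sum>j<p. (Tdiag m t j - Tdiag m s j)\<^sup>2 * (b j)\<^sup>2)"
      by (simp add: sum_distrib_left)
    also have "(\<Sum>j<p. (Tdiag m t j - Tdiag m s j)\<^sup>2 * (b j)\<^sup>2) = (\<Sum>l<d. (w l)\<^sup>2)"
      unfolding split_sum[OF assms(2)] d_def[symmetric] w_def Tdiag_def
      by (simp add: power_mult_distrib mult.commute)
    finally show ?thesis .
  qed
  have Ld: "a * Lf t + (1 - a) * Lf s - Lf z \<le> a * (1 - a) / 8 * (\<Sum>i<n. (linX d m x w i)\<^sup>2)"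
  proof -
    have "a * Lf t + (1 - a) * Lf s - Lf z = (\<Sum>i<n. a * (ln (1 + exp (eta t i)) - y i * eta t i)
        + (1 - a) * (ln (1 + exp (eta s i)) - y i * eta s i) - (ln (1 + exp (eta z i)) - y i * eta z i))"
      unfolding Lf_def by (simp only: sum_distrib_left[symmetric] sum.distrib sum_subtractf)
    also have "\<dots> =
       (\<Sum>i<n. a * ln (1 + exp (eta t i)) + (1 - a) * ln (1 + exp (eta s i)) - ln (1 + exp (a * eta t i + (1 - a) * eta s i)))"
      unfolding etaz by (rule sum.cong[OF refl]) (simp add: algebra_simps)
    also have "\<dots> \<le> (\<Sum>i<n. a * (1 - a) * (eta t i - eta s i)\<^sup>2 / 8)"
      by (rule sum_mono) (rule psi_ineq[OF a])
    also have "\<dots> = a * (1 - a) / 8 * (\<Sum>i<n. (linX d m x w i)\<^sup>2)"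
      unfolding etad by (simp add: sum_distrib_left)
    finally show ?thesis .
  qed
  have R: "(\<Sum>i<n. (linX d m x w i)\<^sup>2) \<le> nu_max n p m x * (\<Sum>l<d. (w l)\<^sup>2)"
    by (rule rayleigh) (simp add: d_def)
  have nrm0: "0 \<le> (\<Sum>l<d. (w l)\<^sup>2)" by (simp add: sum_nonneg)
  have npos: "0 < real n" using assms(1) by simp
  have "(\<Sum>i<n. (linX d m x w i)\<^sup>2) / (8 * real n) \<le> nu_max n p m x / (8 * real n) * (\<Sum>l<d. (w l)\<^sup>2)"
    using R npos by (simp add: divide_right_mono)
  also have "\<dots> \<le> \<delta> * (\<Sum>l<d. (w l)\<^sup>2)" using nu(1) nrm0 by (rule mult_right_mono)
  finally have Q: "(\<Sum>i<n. (linX d m x w i)\<^sup>2) / (8 * real n) \<le> \<delta> * (\<Sum>l<d. (w l)\<^sup>2)" .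
  have aa: "0 \<le> a * (1 - a)" using a by simp
  have "a * (Lf t / real n + lam * B + \<delta> * Df t) + (1 - a) * (Lf s / real n + lam * B + \<delta> * Df s)
        - (Lf z / real n + lam * B + \<delta> * Df z)
      = (a * Lf t + (1 - a) * Lf s - Lf z) / real n + \<delta> * (a * Df t + (1 - a) * Df s - Df z)"
    using npos by (simp add: field_simps)
  also have "\<dots> \<le> a * (1 - a) / 8 * (\<Sum>i<n. (linX d m x w i)\<^sup>2) / real n + \<delta> * (- (a * (1 - a)) * (\<Sum>l<d. (w l)\<^sup>2))"
  proof -
    have "(a * Lf t + (1 - a) * Lf s - Lf z) / real n \<le> a * (1 - a) / 8 * (\<Sum>i<n. (linX d m x w i)\<^sup>2) / real n"
      by (intro divide_right_mono Ld) (use npos in simp)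
    then show ?thesis unfolding Dd by linarith
  qed
  also have "\<dots> = a * (1 - a) * ((\<Sum>i<n. (linX d m x w i)\<^sup>2) / (8 * real n) - \<delta> * (\<Sum>l<d. (w l)\<^sup>2))"
    by (simp add: field_simps)
  also have "\<dots> \<le> 0" using aa Q by (simp add: mult_nonneg_nonpos)
  finally have fin: "a * (Lf t / real n + lam * B + \<delta> * Df t) + (1 - a) * (Lf s / real n + lam * B + \<delta> * Df s)
        - (Lf z / real n + lam * B + \<delta> * Df z) \<le> 0" .
  have "a * Fobj n p m y x \<delta> lam t b0 b + (1 - a) * Fobj n p m y x \<delta> lam s b0 b
         \<le> Fobj n p m y x \<delta> lam z b0 b"
    unfolding FE[OF bt] FE[OF bs] FE[OF bz] using fin by simp
  then show ?thesis unfolding z_def .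
qed

lemma fobj_concave:
  assumes "0 < n" "m \<le> p" and y: "\<forall>i<n. y i \<in> {0, 1}" and lam: "0 \<le> lam"
    and nu: "\<delta> \<ge> nu_max n p m x / (8 * real n)" "0 < \<delta>"
    and bt: "\<forall>l<p - m. 0 \<le> t l \<and> t l \<le> 1" and bs: "\<forall>l<p - m. 0 \<le> s l \<and> s l \<le> 1"
    and a: "0 \<le> a" "a \<le> 1"
  shows "a * fobj n p m y x \<delta> lam t + (1 - a) * fobj n p m y x \<delta> lam s
         \<le> fobj n p m y x \<delta> lam (\<lambda>l. a * t l + (1 - a) * s l)"
proof -
  let ?F = "\<lambda>c. (\<lambda>(b0, b). Fobj n p m y x \<delta> lam c b0 b)"
  have bdd: "bdd_below (range (?F c))" for c
    using Fobj_nonneg[OF y lam] nu(2) by (auto intro!: bdd_belowI[where m=0])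
  have le: "fobj n p m y x \<delta> lam c \<le> Fobj n p m y x \<delta> lam c b0 b" for c b0 b
    unfolding fobj_Fobj by (rule cInf_lower[OF _ bdd]) (auto intro: image_eqI[where x="(b0, b)"])
  show ?thesis unfolding fobj_Fobj[of n p m y x \<delta> lam "\<lambda>l. a * t l + (1 - a) * s l"]
  proof (rule cInf_greatest)
    show "range (?F (\<lambda>l. a * t l + (1 - a) * s l)) \<noteq> {}" by simp
  next
    fix v assume "v \<in> range (?F (\<lambda>l. a * t l + (1 - a) * s l))"
    then obtain b0 b where v: "v = Fobj n p m y x \<delta> lam (\<lambda>l. a * t l + (1 - a) * s l) b0 b" by auto
    have "a * fobj n p m y x \<delta> lam t \<le> a * Fobj n p m y x \<delta> lam t b0 b"
      using a le by (simp add: mult_left_mono)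
    moreover have "(1 - a) * fobj n p m y x \<delta> lam s \<le> (1 - a) * Fobj n p m y x \<delta> lam s b0 b"
      using a le by (simp add: mult_left_mono)
    moreover have "a * Fobj n p m y x \<delta> lam t b0 b + (1 - a) * Fobj n p m y x \<delta> lam s b0 b \<le> v"
      unfolding v by (rule Fobj_concave[OF assms(1,2) y nu bt bs a])
    ultimately show "a * fobj n p m y x \<delta> lam t + (1 - a) * fobj n p m y x \<delta> lam s \<le> v" by linarith
  qed
qed

lemma frac_other:
  assumes t: "t \<in> Tset d k" and i: "i < d" "0 < t i" "t i < 1"
  shows "\<exists>j<d. j \<noteq> i \<and> 0 < t j \<and> t j < 1"
proof (rule ccontr)
  assume "\<not> ?thesis"
  then have o: "\<forall>j<d. j \<noteq> i \<longrightarrow> t j = 0 \<or> t j = 1" using t unfolding Tset_def by force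
  have "(\<Sum>l<d. t l) = t i + (\<Sum>l\<in>{..<d} - {i}. t l)"
    using i by (simp add: sum.remove)
  moreover have "(\<Sum>l\<in>{..<d} - {i}. t l) \<in> \<int>"
    by (rule Ints_sum) (use o in auto)
  moreover have "(\<Sum>l<d. t l) = real k" using t unfolding Tset_def by simp
  ultimately have "t i \<in> \<int>"
    by (metis Ints_diff Ints_of_nat add_diff_cancel_right')
  then obtain z where "t i = of_int z" by (auto elim: Ints_cases)
  with i show False by simp
qed

lemma vertex:
  fixes f :: "(nat \<Rightarrow> real) \<Rightarrow> real"
  assumes conc: "\<forall>t\<in>Tset d k. \<forall>s\<in>Tset d k. \<forall>a::real. 0 \<le> a \<and> a \<le> 1 \<longrightarrow>
        a * f t + (1 - a) * f s \<le> f (\<lambda>l. a * t l + (1 - a) * s l)"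
  shows "t \<in> Tset d k \<Longrightarrow> \<exists>s\<in>Sset d k. f s \<le> f t"
proof (induction "card {l. l < d \<and> 0 < t l \<and> t l < 1}" arbitrary: t rule: less_induct)
  case less
  define Fr where "Fr = (\<lambda>t::nat \<Rightarrow> real. {l. l < d \<and> 0 < t l \<and> t l < 1})"
  have finFr: "finite (Fr c)" for c unfolding Fr_def by simp
  show ?case
  proof (cases "Fr t = {}")
    case True
    then have "t \<in> Sset d k" using less.prems unfolding Fr_def Tset_def Sset_def by force
    then show ?thesis by blast
  next
    case False
    then obtain i where i: "i < d" "0 < t i" "t i < 1" unfolding Fr_def by auto
    obtain j where j: "j < d" "j \<noteq> i" "0 < t j" "t j < 1" using frac_other[OF less.prems i] by blast
    define ep where "ep = min (1 - t i) (t j)"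
    define em where "em = min (t i) (1 - t j)"
    have ep: "ep > 0" "ep \<le> 1 - t i" "ep \<le> t j" using i j unfolding ep_def by auto
    have em: "em > 0" "em \<le> t i" "em \<le> 1 - t j" using i j unfolding em_def by auto
    define mv where "mv = (\<lambda>e::real. \<lambda>l. if l = i then t i + e else if l = j then t j - e else t l)"
    have mvsum: "(\<Sum>l<d. mv e l) = (\<Sum>l<d. t l)" for e
    proof -
      have "mv e = (\<lambda>l. t l + e * ((if l = i then 1 else 0) - (if l = j then 1 else 0)))"
        unfolding mv_def using j(2) by (auto simp: fun_eq_iff)
      moreover have "(\<Sum>l<d. e * ((if l = i then 1 else 0) - (if l = j then 1 else 0))) =
          e * ((\<Sum>l<d. if l = i then 1 else 0) - (\<Sum>l<d. if l = j then 1 else (0::real)))"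
        by (simp only: sum_distrib_left[symmetric] sum_subtractf)
      moreover have "(\<Sum>l<d. if l = i then 1 else 0) - (\<Sum>l<d. if l = j then 1 else (0::real)) = 0"
        using i j by simp
      ultimately show ?thesis by (simp add: sum.distrib)
    qed
    have mvT: "mv e \<in> Tset d k" if "0 \<le> t i + e" "t i + e \<le> 1" "0 \<le> t j - e" "t j - e \<le> 1" for e
      using less.prems that i j mvsum[of e] unfolding Tset_def mv_def by auto
    define t1 where "t1 = mv ep"
    define t2 where "t2 = mv (- em)"
    have t1T: "t1 \<in> Tset d k" unfolding t1_def using ep i j by (intro mvT) auto
    have t2T: "t2 \<in> Tset d k" unfolding t2_def using em i j by (intro mvT) auto
    have sub1: "Fr t1 \<subset> Fr t"
    proof -
      have "Fr t1 \<subseteq> Fr t" using i j unfolding Fr_def t1_def mv_def by auto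
      moreover have "i \<notin> Fr t1 \<or> j \<notin> Fr t1"
        using j(2) unfolding Fr_def t1_def mv_def ep_def by (auto simp: min_def)
      moreover have "i \<in> Fr t" "j \<in> Fr t" using i j unfolding Fr_def by auto
      ultimately show ?thesis by blast
    qed
    have sub2: "Fr t2 \<subset> Fr t"
    proof -
      have "Fr t2 \<subseteq> Fr t" using i j unfolding Fr_def t2_def mv_def by auto
      moreover have "i \<notin> Fr t2 \<or> j \<notin> Fr t2"
        using j(2) unfolding Fr_def t2_def mv_def em_def by (auto simp: min_def)
      moreover have "i \<in> Fr t" "j \<in> Fr t" using i j unfolding Fr_def by auto
      ultimately show ?thesis by blast
    qed
    obtain s1 where s1: "s1 \<in> Sset d k" "f s1 \<le> f t1"
      using less.hyps[OF _ t1T] psubset_card_mono[OF finFr sub1] unfolding Fr_def by blast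
    obtain s2 where s2: "s2 \<in> Sset d k" "f s2 \<le> f t2"
      using less.hyps[OF _ t2T] psubset_card_mono[OF finFr sub2] unfolding Fr_def by blast
    define a where "a = em / (ep + em)"
    have a: "0 \<le> a" "a \<le> 1" unfolding a_def using ep em by auto
    have comb: "(\<lambda>l. a * t1 l + (1 - a) * t2 l) = t"
    proof
      fix l
      have e1: "a * ep - (1 - a) * em = 0"
        unfolding a_def using ep em by (simp add: field_simps)
      show "a * t1 l + (1 - a) * t2 l = t l"
      proof (cases "l = i \<or> l = j")
        case True
        then show ?thesis unfolding t1_def t2_def mv_def using e1 j(2)
          by (auto simp: algebra_simps)
      next
        case False
        then show ?thesis unfolding t1_def t2_def mv_def by (auto simp: algebra_simps)
      qed
    qed
    have "a * f t1 + (1 - a) * f t2 \<le> f t"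
      using conc t1T t2T a comb by metis
    moreover have "min (f t1) (f t2) \<le> a * f t1 + (1 - a) * f t2"
    proof -
      have "a * min (f t1) (f t2) \<le> a * f t1" using a by (simp add: mult_left_mono)
      moreover have "(1 - a) * min (f t1) (f t2) \<le> (1 - a) * f t2" using a by (simp add: mult_left_mono)
      ultimately show ?thesis by (simp add: algebra_simps) 
    qed
    ultimately have mt: "min (f t1) (f t2) \<le> f t" by linarith
    show ?thesis
    proof (cases "f t1 \<le> f t2")
      case True
      then have "f s1 \<le> f t" using mt s1 by linarith
      then show ?thesis using s1 by blast
    next
      case False
      then have "f s2 \<le> f t" using mt s2 by linarith
      then show ?thesis using s2 by blast
    qed
  qed
qed

lemma Sset_finite: "finite (Sset d k)"
proof (rule finite_subset)
  show "Sset d k \<subseteq> (\<lambda>A. \<lambda>l. if l \<in> A then 1 else 0) ` Pow {..<d}"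
  proof
    fix s assume s: "s \<in> Sset d k"
    have "s = (\<lambda>l. if l \<in> {l. l < d \<and> s l = 1} then 1 else 0)"
    proof
      fix l show "s l = (if l \<in> {l. l < d \<and> s l = 1} then 1 else 0)"
        using s unfolding Sset_def by (cases "l < d") auto
    qed
    then show "s \<in> (\<lambda>A. \<lambda>l. if l \<in> A then 1 else 0) ` Pow {..<d}" by blast
  qed
qed simp

lemma Sset_nonempty:
  assumes "k \<le> d" shows "(\<lambda>l. if l < k then 1 else 0) \<in> Sset d k"
proof -
  have "(\<Sum>l<d. if l < k then 1 else (0::real)) = (\<Sum>l\<in>{..<d} \<inter> {l. l < k}. 1)"
    by (simp add: sum.If_cases)
  also have "{..<d} \<inter> {l. l < k} = {..<k}" using assms by auto
  finally show ?thesis using assms unfolding Sset_def by auto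
qed

theorem mainTheorem3:
  fixes n p m k :: nat and y :: "nat \<Rightarrow> real" and x :: "nat \<Rightarrow> nat \<Rightarrow> real"
    and lam \<delta> :: real
  assumes "0 < n" and "m \<le> p"
    and "\<forall>i<n. y i \<in> {0, 1}"
    and "0 \<le> lam"
    and "\<delta> \<ge> nu_max n p m x / (8 * real n)" and "0 < \<delta>"
    and "k \<le> p - m"
  shows "concave_on_fun (open_cube (p - m)) (fobj n p m y x \<delta> lam)
    \<and> concave_on_fun (Tset (p - m) k) (fobj n p m y x \<delta> lam)
    \<and> (\<exists>s\<in>Sset (p - m) k. \<forall>t\<in>Tset (p - m) k.
          fobj n p m y x \<delta> lam s \<le> fobj n p m y x \<delta> lam t)"
proof -
  let ?f = "fobj n p m y x \<delta> lam"
  have c1: "concave_on_fun (open_cube (p - m)) ?f"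
    unfolding concave_on_fun_def
  proof (intro ballI allI impI)
    fix t s :: "nat \<Rightarrow> real" and a :: real
    assume t: "t \<in> open_cube (p - m)" and s: "s \<in> open_cube (p - m)" and a: "0 \<le> a \<and> a \<le> 1"
    have bt: "\<forall>l<p - m. 0 \<le> t l \<and> t l \<le> 1" using t unfolding open_cube_def by (auto simp: less_imp_le)
    have bs: "\<forall>l<p - m. 0 \<le> s l \<and> s l \<le> 1" using s unfolding open_cube_def by (auto simp: less_imp_le)
    show "a * ?f t + (1 - a) * ?f s \<le> ?f (\<lambda>l. a * t l + (1 - a) * s l)"
      using fobj_concave[OF assms(1-6) bt bs] a by blast
  qed
  have c2: "concave_on_fun (Tset (p - m) k) ?f"
    unfolding concave_on_fun_def Tset_def
    by (auto intro!: fobj_concave[OF assms(1-6)])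
  have vx: "\<exists>s\<in>Sset (p - m) k. ?f s \<le> ?f t" if "t \<in> Tset (p - m) k" for t
    by (rule vertex[OF c2[unfolded concave_on_fun_def] that])
  define S where "S = Sset (p - m) k"
  have finS: "finite (?f ` S)" unfolding S_def by (simp add: Sset_finite)
  have neS: "?f ` S \<noteq> {}" unfolding S_def using Sset_nonempty[OF assms(7)] by blast
  obtain s0 where s0: "s0 \<in> S" "?f s0 = Min (?f ` S)" using Min_in[OF finS neS] by auto
  have "\<forall>t\<in>Tset (p - m) k. ?f s0 \<le> ?f t"
  proof
    fix t assume "t \<in> Tset (p - m) k"
    then obtain s where "s \<in> S" "?f s \<le> ?f t" using vx unfolding S_def by blast
    moreover have "?f s0 \<le> ?f s" using s0 Min_le[OF finS] \<open>s \<in> S\<close> by simp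
    ultimately show "?f s0 \<le> ?f t" by linarith
  qed
  then show ?thesis using c1 c2 s0(1) unfolding S_def by blast
qed

end
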